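(* Let $n,m$ be integers with $1\le n\le m$ and let $(G,\sigma)$ be a signed graph with $G=P_n\,\square\,P_m$ (a signed grid). Then $\chi_s(G,\sigma)\le 6$. If $n\le 4$, then $\chi_s(G,\sigma)\le 5$. Moreover, there exist signed grids (signed graphs whose underlying graph is $P_n\,\square\,P_m$ for some $n,m$) with chromatic number $5$.
   Context: A signed graph $(G,\sigma)$ is a simple loopless undirected graph $G$ with a signature $\sigma:E(G)\to\{+1,-1\}$. Switching a vertex $v$ negates the sign of every edge incident to $v$; two signatures are equivalent if one is obtained from the other by switching a set of vertices. A homomorphism of $(G,\sigma)$ to $(H,\pi)$ is a graph homomorphism $\varphi:G\to H$ for which there is a signature $\sigma'$ equivalent to $\sigma$ with $\pi(\varphi(u)\varphi(v))=\sigma'(uv)$ for every edge $uv$ of $G$. $\chi_s(G,\sigma)$ is the smallest order of a signed graph to which $(G,\sigma)$ admits a homomorphism. $P_n$ is the path on $n$ vertices and $\square$ is the Cartesian product of graphs. *)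

theory Defs
  imports Main
begin

definition signed_graph :: "'a set \<Rightarrow> 'a set set \<Rightarrow> ('a set \<Rightarrow> int) \<Rightarrow> bool" where
  "signed_graph V E \<sigma> \<longleftrightarrow>
     (\<forall>e\<in>E. \<exists>u v. e = {u, v} \<and> u \<noteq> v \<and> u \<in> V \<and> v \<in> V) \<and>
     (\<forall>e\<in>E. \<sigma> e = 1 \<or> \<sigma> e = -1)"

definition switch :: "'a set \<Rightarrow> ('a set \<Rightarrow> int) \<Rightarrow> 'a set \<Rightarrow> int" where
  "switch S \<sigma> e = (if card (e \<inter> S) = 1 then - \<sigma> e else \<sigma> e)"

definition signed_hom ::
  "'a set \<Rightarrow> 'a set set \<Rightarrow> ('a set \<Rightarrow> int) \<Rightarrow> 'b set \<Rightarrow> 'b set set \<Rightarrow> ('b set \<Rightarrow> int) \<Rightarrow> ('a \<Rightarrow> 'b) \<Rightarrow> bool" where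
  "signed_hom V E \<sigma> W F \<pi> \<phi> \<longleftrightarrow>
     (\<forall>v\<in>V. \<phi> v \<in> W) \<and>
     (\<exists>S\<subseteq>V. \<forall>u v. {u, v} \<in> E \<longrightarrow>
        {\<phi> u, \<phi> v} \<in> F \<and> \<pi> {\<phi> u, \<phi> v} = switch S \<sigma> {u, v})"

text \<open>Signed chromatic number: least order of a signed graph receiving a homomorphism.
  Targets are taken (w.l.o.g., up to relabelling) on vertex set {0..<k}.\<close>
definition chi_s :: "'a set \<Rightarrow> 'a set set \<Rightarrow> ('a set \<Rightarrow> int) \<Rightarrow> nat" where
  "chi_s V E \<sigma> = (LEAST k. \<exists>(F :: nat set set) \<pi> \<phi>.
       signed_graph {..<k} F \<pi> \<and> signed_hom V E \<sigma> {..<k} F \<pi> \<phi>)"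

definition grid_V :: "nat \<Rightarrow> nat \<Rightarrow> (nat \<times> nat) set" where
  "grid_V n m = {(i, j). i < n \<and> j < m}"

definition grid_E :: "nat \<Rightarrow> nat \<Rightarrow> (nat \<times> nat) set set" where
  "grid_E n m = {{(i, j), (k, l)} | i j k l.
      (i, j) \<in> grid_V n m \<and> (k, l) \<in> grid_V n m \<and>
      ((i = k \<and> Suc j = l) \<or> (j = l \<and> Suc i = k))}"

end

theory Submission
  imports Defs
begin

definition pm1 :: "int \<Rightarrow> bool" where "pm1 x \<longleftrightarrow> x = 1 \<or> x = -1"

lemma pm1_sq[simp]: "pm1 x \<Longrightarrow> x * x = 1"
  unfolding pm1_def by auto

lemma pm1_mult[simp]: "pm1 x \<Longrightarrow> pm1 y \<Longrightarrow> pm1 (x * y)"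
  unfolding pm1_def by auto

lemma pm1_simps[simp]: "pm1 1" "pm1 (-1)"
  unfolding pm1_def by auto

lemma pm1_neq0: "pm1 x \<Longrightarrow> x \<noteq> 0"
  unfolding pm1_def by auto

lemma switch_pair:
  assumes "u \<noteq> v"
  shows "switch S \<sigma> {u, v} = \<sigma> {u, v} * (if u \<in> S then -1 else 1) * (if v \<in> S then -1 else 1)"
proof -
  have "{u,v} \<inter> S = (if u \<in> S then {u} else {}) \<union> (if v \<in> S then {v} else {})" by auto
  then show ?thesis using assms unfolding switch_def by (auto simp: card_insert_if)
qed

lemma grid_E_cases:
  assumes "{u, v} \<in> grid_E n m"
  obtains i j where "i < n" "Suc j < m" "{u, v} = {(i, j), (i, Suc j)}"
  | i j where "Suc i < n" "j < m" "{u, v} = {(i, j), (Suc i, j)}"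
proof -
  have "\<exists>i j k l. {u, v} = {(i, j), (k, l)} \<and> ((i, j) \<in> grid_V n m \<and> (k, l) \<in> grid_V n m \<and>
      ((i = k \<and> Suc j = l) \<or> (j = l \<and> Suc i = k)))"
    using assms unfolding grid_E_def by (simp only: mem_Collect_eq)
  then obtain i j k l where e: "{u, v} = {(i, j), (k, l)}" "(i, j) \<in> grid_V n m" "(k, l) \<in> grid_V n m"
     "(i = k \<and> Suc j = l) \<or> (j = l \<and> Suc i = k)"
    by (elim exE conjE) (rule that)
  have b: "i < n" "j < m" "k < n" "l < m" using e(2,3) unfolding grid_V_def by auto
  show ?thesis
  proof (cases "i = k \<and> Suc j = l")
    case True
    then show ?thesis using that(1)[of i j] b e(1) by simp
  next
    case False
    then have "j = l" "Suc i = k" using e(4) by auto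
    then show ?thesis using that(2)[of i j] b e(1) by simp
  qed
qed

lemma grid_E_h: "i < n \<Longrightarrow> Suc j < m \<Longrightarrow> {(i, j), (i, Suc j)} \<in> grid_E n m"
  unfolding grid_E_def grid_V_def by (rule CollectI, rule exI[of _ i], rule exI[of _ j], rule exI[of _ i], rule exI[of _ "Suc j"]) simp

lemma grid_E_v: "Suc i < n \<Longrightarrow> j < m \<Longrightarrow> {(i, j), (Suc i, j)} \<in> grid_E n m"
  unfolding grid_E_def grid_V_def by (rule CollectI, rule exI[of _ i], rule exI[of _ j], rule exI[of _ "Suc i"], rule exI[of _ j]) simp

definition goodP :: "nat \<Rightarrow> (nat \<Rightarrow> nat \<Rightarrow> int) \<Rightarrow> bool" where
  "goodP K P \<longleftrightarrow> (\<forall>a b. P a b = P b a) \<and> (\<forall>a. P a a = 0) \<and>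
     (\<forall>a b. P a b \<noteq> 0 \<longrightarrow> pm1 (P a b) \<and> a < K \<and> b < K)"

definition tF :: "(nat \<Rightarrow> nat \<Rightarrow> int) \<Rightarrow> nat set set" where
  "tF P = {{a, b} | a b. P a b \<noteq> 0}"

definition tpi :: "(nat \<Rightarrow> nat \<Rightarrow> int) \<Rightarrow> nat set \<Rightarrow> int" where
  "tpi P e = P (Min e) (Max e)"

lemma tpi_pair: "goodP K P \<Longrightarrow> tpi P {a, b} = P a b"
  unfolding tpi_def goodP_def by (cases "a \<le> b") (auto simp: min_def max_def)

lemma tF_pair: "P a b \<noteq> 0 \<Longrightarrow> {a, b} \<in> tF P"
  unfolding tF_def by blast

lemma target_sg: assumes g: "goodP K P" shows "signed_graph {..<K} (tF P) (tpi P)"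
proof -
  have "(\<exists>u v. e = {u, v} \<and> u \<noteq> v \<and> u \<in> {..<K} \<and> v \<in> {..<K}) \<and> (tpi P e = 1 \<or> tpi P e = -1)"
    if eF: "e \<in> tF P" for e
  proof -
    obtain a b where e: "e = {a, b}" "P a b \<noteq> 0" using eF unfolding tF_def by blast
    have "P a a = 0" using g unfolding goodP_def by blast
    then have ab: "a \<noteq> b" using e by blast
    have "pm1 (P a b) \<and> a < K \<and> b < K" using g e(2) unfolding goodP_def by blast
    moreover have "tpi P e = P a b" using e(1) tpi_pair[OF g] by simp
    ultimately have "tpi P e = 1 \<or> tpi P e = -1" "a < K" "b < K" unfolding pm1_def by auto
    then show ?thesis using ab e(1) by blast
  qed
  then show ?thesis unfolding signed_graph_def by blast
qed

definition hs :: "((nat \<times> nat) set \<Rightarrow> int) \<Rightarrow> nat \<Rightarrow> nat \<Rightarrow> int" where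
  "hs \<sigma> i j = \<sigma> {(i, j), (i, Suc j)}"
definition vs :: "((nat \<times> nat) set \<Rightarrow> int) \<Rightarrow> nat \<Rightarrow> nat \<Rightarrow> int" where
  "vs \<sigma> i j = \<sigma> {(i, j), (Suc i, j)}"

definition valid :: "nat \<Rightarrow> nat \<Rightarrow> nat \<Rightarrow> (nat \<Rightarrow> nat \<Rightarrow> int) \<Rightarrow> ((nat \<times> nat) set \<Rightarrow> int)
   \<Rightarrow> (nat \<Rightarrow> nat \<Rightarrow> nat) \<Rightarrow> (nat \<Rightarrow> nat \<Rightarrow> int) \<Rightarrow> bool" where
  "valid n k K P \<sigma> C T \<longleftrightarrow> (\<forall>j<k. \<forall>i<n. pm1 (T j i) \<and> C j i < K) \<and>
    (\<forall>j<k. \<forall>i. Suc i < n \<longrightarrow> P (C j i) (C j (Suc i)) = vs \<sigma> i j * T j i * T j (Suc i)) \<and>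
    (\<forall>j. Suc j < k \<longrightarrow> (\<forall>i<n. P (C j i) (C (Suc j) i) = hs \<sigma> i j * T j i * T (Suc j) i))"

definition INIT :: "nat \<Rightarrow> nat \<Rightarrow> (nat \<Rightarrow> nat \<Rightarrow> int) \<Rightarrow> (nat \<Rightarrow> nat) set \<Rightarrow> bool" where
  "INIT n K P G \<longleftrightarrow> (\<exists>b\<in>G. (\<forall>i<n. b i < K) \<and> (\<forall>i. Suc i < n \<longrightarrow> P (b i) (b (Suc i)) \<noteq> 0))"

definition STEP :: "nat \<Rightarrow> nat \<Rightarrow> (nat \<Rightarrow> nat \<Rightarrow> int) \<Rightarrow> (nat \<Rightarrow> nat) set \<Rightarrow> bool" where
  "STEP n K P G \<longleftrightarrow> (\<forall>a\<in>G. \<forall>w. (\<forall>i. pm1 (w i)) \<longrightarrow> (\<exists>b\<in>G. (\<forall>i<n. b i < K \<and> P (a i) (b i) \<noteq> 0) \<and>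
      (\<forall>i. Suc i < n \<longrightarrow> P (b i) (b (Suc i)) * P (a i) (b i) * P (a (Suc i)) (b (Suc i)) = w i)))"

fun tsw :: "(nat \<Rightarrow> nat \<Rightarrow> int) \<Rightarrow> (nat \<Rightarrow> nat) \<Rightarrow> (nat \<Rightarrow> int) \<Rightarrow> nat \<Rightarrow> int" where
  "tsw P b v 0 = 1"
| "tsw P b v (Suc i) = P (b i) (b (Suc i)) * v i * tsw P b v i"

lemma tsw_pm1: "(\<And>i. Suc i < n \<Longrightarrow> pm1 (P (b i) (b (Suc i)))) \<Longrightarrow> (\<And>i. pm1 (v i)) \<Longrightarrow>
   i < n \<Longrightarrow> pm1 (tsw P b v i)"
  by (induction i) auto

lemma sg_valid:
  assumes gs: "\<And>i j. i < n \<Longrightarrow> Suc j < m \<Longrightarrow> pm1 (hs \<sigma> i j)"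
     "\<And>i j. Suc i < n \<Longrightarrow> j < m \<Longrightarrow> pm1 (vs \<sigma> i j)"
    and gP: "goodP K P" and I: "INIT n K P G" and S: "STEP n K P G"
  shows "1 \<le> k \<Longrightarrow> k \<le> m \<Longrightarrow> \<exists>C T. valid n k K P \<sigma> C T \<and> C (k - 1) \<in> G"
proof (induction k)
  case 0
  then show ?case by simp
next
  case (Suc k)
  have Ppm: "pm1 (P a b)" if "P a b \<noteq> 0" for a b using gP that unfolding goodP_def by blast
  show ?case
  proof (cases "k = 0")
    case True
    obtain b where b: "b \<in> G" "\<forall>i<n. b i < K" "\<forall>i. Suc i < n \<longrightarrow> P (b i) (b (Suc i)) \<noteq> 0"
      using I unfolding INIT_def by blast
    define v where "v i = (if Suc i < n then vs \<sigma> i 0 else 1)" for i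
    have v: "pm1 (v i)" for i using gs(2)[of i 0] Suc True unfolding v_def by auto
    have bp: "pm1 (P (b i) (b (Suc i)))" if "Suc i < n" for i using b(3) that Ppm by blast
    define t where "t = tsw P b v"
    have tp: "pm1 (t i)" if "i < n" for i unfolding t_def using tsw_pm1[of n P b v i] bp v that by blast
    have "valid n 1 K P \<sigma> (\<lambda>j. b) (\<lambda>j. t)"
      unfolding valid_def
    proof (intro conjI allI impI)
      fix j i :: nat assume "j < 1" "Suc i < n"
      have "P (b i) (b (Suc i)) = P (b i) (b (Suc i)) * (v i * v i) * (t i * t i)"
        using v tp \<open>Suc i < n\<close> by simp
      also have "\<dots> = v i * t i * t (Suc i)" unfolding t_def by (simp add: ac_simps)
      finally show "P (b i) (b (Suc i)) = vs \<sigma> i j * t i * t (Suc i)"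
        using \<open>j < 1\<close> \<open>Suc i < n\<close> unfolding v_def by simp
    qed (use tp b in auto)
    then show ?thesis using True b by auto
  next
    case False
    then obtain C T where CT: "valid n k K P \<sigma> C T" "C (k - 1) \<in> G" using Suc by auto
    define j0 where "j0 = k - 1"
    have k: "k = Suc j0" using False unfolding j0_def by simp
    define a where "a = C j0"
    define h where "h i = hs \<sigma> i j0 * T j0 i" for i
    have hp: "pm1 (h i)" if "i < n" for i
      using CT(1) gs(1)[of i j0] that Suc.prems unfolding h_def valid_def k by auto
    define w where "w i = (if Suc i < n then vs \<sigma> i k * h i * h (Suc i) else 1)" for i
    have wp: "pm1 (w i)" for i unfolding w_def using hp gs(2)[of i k] Suc.prems by auto
    obtain b where b: "b \<in> G" "\<forall>i<n. b i < K \<and> P (a i) (b i) \<noteq> 0"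
      "\<forall>i. Suc i < n \<longrightarrow> P (b i) (b (Suc i)) * P (a i) (b i) * P (a (Suc i)) (b (Suc i)) = w i"
      using S CT(2) wp unfolding STEP_def a_def j0_def by blast
    define t where "t i = P (a i) (b i) * h i" for i
    have pab: "pm1 (P (a i) (b i))" if "i < n" for i using b(2) that Ppm by blast
    have tp: "pm1 (t i)" if "i < n" for i using pab hp that unfolding t_def by simp
    have "valid n (Suc k) K P \<sigma> (C(k := b)) (T(k := t))"
      unfolding valid_def
    proof (intro conjI allI impI)
      fix j i assume "j < Suc k" "i < n"
      then show "pm1 ((T(k := t)) j i)" "(C(k := b)) j i < K"
        using CT(1) tp b(2) unfolding valid_def by (auto simp: less_Suc_eq)
    next
      fix j i assume j: "j < Suc k" and i: "Suc i < n"
      show "P ((C(k := b)) j i) ((C(k := b)) j (Suc i)) = vs \<sigma> i j * (T(k := t)) j i * (T(k := t)) j (Suc i)"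
      proof (cases "j = k")
        case True
        have e: "P (b i) (b (Suc i)) * P (a i) (b i) * P (a (Suc i)) (b (Suc i)) = w i" using b(3) i by blast
        have "P (b i) (b (Suc i)) = P (b i) (b (Suc i)) * (P (a i) (b i) * P (a i) (b i)) *
             (P (a (Suc i)) (b (Suc i)) * P (a (Suc i)) (b (Suc i)))" using pab i by simp
        also have "\<dots> = w i * P (a i) (b i) * P (a (Suc i)) (b (Suc i))" using e by (simp add: ac_simps)
        also have "\<dots> = vs \<sigma> i k * t i * t (Suc i)" unfolding w_def t_def using i by (simp add: ac_simps)
        finally show ?thesis using True by simp
      next
        case False
        then show ?thesis using CT(1) j i unfolding valid_def by auto
      qed
    next
      fix j i assume j: "Suc j < Suc k" and i: "i < n"
      show "P ((C(k := b)) j i) ((C(k := b)) (Suc j) i) = hs \<sigma> i j * (T(k := t)) j i * (T(k := t)) (Suc j) i"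
      proof (cases "Suc j = k")
        case True
        then have jj: "j = j0" using k by simp
        have "hs \<sigma> i j * T j i * t i = P (a i) (b i) * (h i * h i)"
          unfolding t_def h_def jj by (simp add: ac_simps)
        also have "\<dots> = P (a i) (b i)" using hp i by simp
        finally show ?thesis using True jj k unfolding a_def by simp
      next
        case False
        then have "Suc j < k" using j by simp
        then show ?thesis using CT(1) i unfolding valid_def by auto
      qed
    qed
    then show ?thesis using b(1) by auto
  qed
qed

lemma hom_from_valid:
  assumes gs: "\<And>i j. i < n \<Longrightarrow> Suc j < m \<Longrightarrow> pm1 (hs \<sigma> i j)"
     "\<And>i j. Suc i < n \<Longrightarrow> j < m \<Longrightarrow> pm1 (vs \<sigma> i j)"
    and gP: "goodP K P" and V: "valid n m K P \<sigma> C T"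
  shows "signed_hom (grid_V n m) (grid_E n m) \<sigma> {..<K} (tF P) (tpi P) (\<lambda>(i, j). C j i)"
proof -
  define S where "S = {(i, j). i < n \<and> j < m \<and> T j i = -1}"
  have sgS: "(if (i, j) \<in> S then -1 else 1) = T j i" if "i < n" "j < m" for i j
    using V that unfolding valid_def S_def pm1_def by auto
  have key: "{(\<lambda>(i, j). C j i) x, (\<lambda>(i, j). C j i) y} \<in> tF P \<and>
      tpi P {(\<lambda>(i, j). C j i) x, (\<lambda>(i, j). C j i) y} = switch S \<sigma> {x, y}"
    if "(x = (i, j) \<and> y = (i, Suc j) \<and> i < n \<and> Suc j < m) \<or> (x = (i, j) \<and> y = (Suc i, j) \<and> Suc i < n \<and> j < m)"
    for x y i j
    using that
  proof
    assume h: "x = (i, j) \<and> y = (i, Suc j) \<and> i < n \<and> Suc j < m"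
    have e: "P (C j i) (C (Suc j) i) = hs \<sigma> i j * T j i * T (Suc j) i" using V h unfolding valid_def by blast
    have "pm1 (P (C j i) (C (Suc j) i))" unfolding e using V h gs(1)[of i j] unfolding valid_def by auto
    then have ne: "P (C j i) (C (Suc j) i) \<noteq> 0" by (rule pm1_neq0)
    have sw: "switch S \<sigma> {x, y} = hs \<sigma> i j * T j i * T (Suc j) i"
      using switch_pair[of x y S \<sigma>] h sgS[of i j] sgS[of i "Suc j"] by (simp add: hs_def)
    show ?thesis using h e tF_pair[of P "C j i" "C (Suc j) i", OF ne] tpi_pair[OF gP] sw by simp
  next
    assume h: "x = (i, j) \<and> y = (Suc i, j) \<and> Suc i < n \<and> j < m"
    have e: "P (C j i) (C j (Suc i)) = vs \<sigma> i j * T j i * T j (Suc i)" using V h unfolding valid_def by blast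
    have "pm1 (P (C j i) (C j (Suc i)))" unfolding e using V h gs(2)[of i j] unfolding valid_def by auto
    then have ne: "P (C j i) (C j (Suc i)) \<noteq> 0" by (rule pm1_neq0)
    have sw: "switch S \<sigma> {x, y} = vs \<sigma> i j * T j i * T j (Suc i)"
      using switch_pair[of x y S \<sigma>] h sgS[of i j] sgS[of "Suc i" j] by (simp add: vs_def)
    show ?thesis using h e tF_pair[of P "C j i" "C j (Suc i)", OF ne] tpi_pair[OF gP] sw by simp
  qed
  have A: "\<forall>v\<in>grid_V n m. (\<lambda>(i, j). C j i) v \<in> {..<K}" using V unfolding valid_def grid_V_def by auto
  have B: "S \<subseteq> grid_V n m" unfolding S_def grid_V_def by auto
  have D: "{(\<lambda>(i, j). C j i) u, (\<lambda>(i, j). C j i) v} \<in> tF P \<and>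
         tpi P {(\<lambda>(i, j). C j i) u, (\<lambda>(i, j). C j i) v} = switch S \<sigma> {u, v}"
    if uv: "{u, v} \<in> grid_E n m" for u v
    using uv
  proof (cases rule: grid_E_cases)
    case (1 i j)
    then consider "u = (i, j)" "v = (i, Suc j)" | "u = (i, Suc j)" "v = (i, j)" by (auto simp: doubleton_eq_iff)
    then show ?thesis using key[where x="(i, j)" and y="(i, Suc j)" and i=i and j=j] 1 by cases (auto simp: insert_commute)
  next
    case (2 i j)
    then consider "u = (i, j)" "v = (Suc i, j)" | "u = (Suc i, j)" "v = (i, j)" by (auto simp: doubleton_eq_iff)
    then show ?thesis using key[where x="(i, j)" and y="(Suc i, j)" and i=i and j=j] 2 by cases (auto simp: insert_commute)
  qed
  show ?thesis unfolding signed_hom_def using A B D by blast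
qed

lemma chi_le:
  assumes "signed_graph {..<K} F \<pi>" "signed_hom V E \<sigma> {..<K} F \<pi> \<phi>"
  shows "chi_s V E \<sigma> \<le> K"
  unfolding chi_s_def by (rule Least_le) (use assms in blast)

lemma grid_hom_ex:
  assumes sg: "signed_graph (grid_V n m) (grid_E n m) \<sigma>" and m: "1 \<le> m"
    and gP: "goodP K P" and I: "INIT n K P G" and S: "STEP n K P G"
  shows "\<exists>(F :: nat set set) \<pi> \<phi>. signed_graph {..<K} F \<pi> \<and> signed_hom (grid_V n m) (grid_E n m) \<sigma> {..<K} F \<pi> \<phi>"
proof -
  have pe: "pm1 (\<sigma> e)" if "e \<in> grid_E n m" for e using sg that unfolding signed_graph_def pm1_def by blast
  have gs1: "pm1 (hs \<sigma> i j)" if "i < n" "Suc j < m" for i j unfolding hs_def using pe grid_E_h that by blast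
  have gs2: "pm1 (vs \<sigma> i j)" if "Suc i < n" "j < m" for i j unfolding vs_def using pe grid_E_v that by blast
  obtain C T where "valid n m K P \<sigma> C T" using sg_valid[OF gs1 gs2 gP I S m] by blast
  then show ?thesis using hom_from_valid[OF gs1 gs2 gP] target_sg[OF gP] by blast
qed

theorem grid_bound:
  assumes sg: "signed_graph (grid_V n m) (grid_E n m) \<sigma>" and m: "1 \<le> m"
    and gP: "goodP K P" and I: "INIT n K P G" and S: "STEP n K P G"
  shows "chi_s (grid_V n m) (grid_E n m) \<sigma> \<le> K"
  using grid_hom_ex[OF assms] chi_le by blast

lemma grid_sg:
  assumes "\<And>e. e \<in> grid_E n m \<Longrightarrow> \<sigma> e = 1 \<or> \<sigma> e = -1"
  shows "signed_graph (grid_V n m) (grid_E n m) \<sigma>"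
proof -
  have "\<exists>u v. e = {u, v} \<and> u \<noteq> v \<and> u \<in> grid_V n m \<and> v \<in> grid_V n m" if e: "e \<in> grid_E n m" for e
  proof -
    have "\<exists>i j k l. e = {(i, j), (k, l)} \<and> ((i, j) \<in> grid_V n m \<and> (k, l) \<in> grid_V n m \<and>
        ((i = k \<and> Suc j = l) \<or> (j = l \<and> Suc i = k)))"
      using e unfolding grid_E_def by (simp only: mem_Collect_eq)
    then obtain i j k l where e: "e = {(i, j), (k, l)}" "(i, j) \<in> grid_V n m" "(k, l) \<in> grid_V n m"
       "(i = k \<and> Suc j = l) \<or> (j = l \<and> Suc i = k)"
      by (elim exE conjE) (rule that)
    have "(i, j) \<noteq> (k, l)" using e(4) by auto
    then show ?thesis using e(1-3) by blast
  qed
  then show ?thesis unfolding signed_graph_def using assms by blast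
qed


definition negs6 :: "(nat \<times> nat) list" where "negs6 = [(0,3),(0,4),(1,2),(1,4),(2,3)]"

definition P6 :: "nat \<Rightarrow> nat \<Rightarrow> int" where
  "P6 a b = (if a = b \<or> 6 \<le> a \<or> 6 \<le> b then 0
     else if (min a b, max a b) \<in> set negs6 then -1 else 1)"

lemma goodP6: "goodP 6 P6"
proof -
  have "P6 a b = P6 b a" for a b
    unfolding P6_def by (simp add: min.commute max.commute eq_commute[of a b] disj_commute)
  moreover have "P6 a a = 0" for a unfolding P6_def by simp
  moreover have "pm1 (P6 a b) \<and> a < 6 \<and> b < 6" if "P6 a b \<noteq> 0" for a b
    using that unfolding P6_def pm1_def by (simp split: if_splits)
  ultimately show ?thesis unfolding goodP_def by blast
qed

definition L6 :: "nat list" where "L6 = [0,1,2,3,4,5]"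

definition gd6 :: "nat \<Rightarrow> nat \<Rightarrow> int \<Rightarrow> nat \<Rightarrow> bool" where
  "gd6 x y s c \<longleftrightarrow> P6 x c \<noteq> 0 \<and> P6 y c \<noteq> 0 \<and> P6 x c * P6 y c = s"

fun cnt6 :: "nat \<Rightarrow> nat \<Rightarrow> int \<Rightarrow> nat list \<Rightarrow> nat" where
  "cnt6 x y s [] = 0"
| "cnt6 x y s (c # cs) = (if gd6 x y s c then 1 else 0) + cnt6 x y s cs"

fun chkY6 :: "nat \<Rightarrow> nat list \<Rightarrow> bool" where
  "chkY6 x [] = True"
| "chkY6 x (y # ys) = ((x = y \<or> (2 \<le> cnt6 x y 1 L6 \<and> 2 \<le> cnt6 x y (-1) L6)) \<and> chkY6 x ys)"

fun chkX6 :: "nat list \<Rightarrow> bool" where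
  "chkX6 [] = True"
| "chkX6 (x # xs) = (chkY6 x L6 \<and> chkX6 xs)"

lemma chk6: "chkX6 L6"
  by (simp add: gd6_def P6_def negs6_def L6_def)

lemma cnt6_1: "1 \<le> cnt6 x y s cs \<Longrightarrow> \<exists>c\<in>set cs. gd6 x y s c"
  by (induction cs) (auto split: if_splits)

lemma cnt6_2: "2 \<le> cnt6 x y s cs \<Longrightarrow> distinct cs \<Longrightarrow> \<exists>c\<in>set cs. gd6 x y s c \<and> c \<noteq> d"
proof (induction cs)
  case Nil then show ?case by simp
next
  case (Cons c cs)
  show ?case
  proof (cases "gd6 x y s c \<and> c \<noteq> d")
    case True then show ?thesis by auto
  next
    case False
    show ?thesis
    proof (cases "gd6 x y s c")
      case True
      then have "c = d" using False by simp
      have "1 \<le> cnt6 x y s cs" using Cons.prems True by simp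
      then obtain c' where "c' \<in> set cs" "gd6 x y s c'" using cnt6_1 by blast
      then show ?thesis using Cons.prems(2) \<open>c = d\<close> by auto
    next
      case f: False
      then have "2 \<le> cnt6 x y s cs" using Cons.prems by simp
      then show ?thesis using Cons.IH Cons.prems(2) by auto
    qed
  qed
qed

lemma chkY6_D: "chkY6 x ys \<Longrightarrow> y \<in> set ys \<Longrightarrow> x \<noteq> y \<Longrightarrow>
   2 \<le> cnt6 x y 1 L6 \<and> 2 \<le> cnt6 x y (-1) L6"
  by (induction ys) auto

lemma chkX6_D: "chkX6 xs \<Longrightarrow> x \<in> set xs \<Longrightarrow> chkY6 x L6"
  by (induction xs) auto

lemma set6: "x < 6 \<Longrightarrow> x \<in> set L6"
  unfolding L6_def by auto

lemma K6prop:
  assumes "x < 6" "y < 6" "x \<noteq> y" "pm1 s"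
  shows "\<exists>c<6. c \<noteq> d \<and> P6 x c \<noteq> 0 \<and> P6 y c \<noteq> 0 \<and> P6 x c * P6 y c = s"
proof -
  have "chkY6 x L6" using chkX6_D[OF chk6 set6[OF assms(1)]] .
  then have "2 \<le> cnt6 x y s L6"
    using chkY6_D[OF _ set6[OF assms(2)] assms(3)] assms(4) unfolding pm1_def by auto
  moreover have "distinct L6" unfolding L6_def by simp
  ultimately obtain c where "c \<in> set L6" "gd6 x y s c" "c \<noteq> d"
    using cnt6_2 by blast
  moreover have "c < 6" using \<open>c \<in> set L6\<close> unfolding L6_def by auto
  ultimately show ?thesis unfolding gd6_def by blast
qed

lemma K6base: "y < 6 \<Longrightarrow> \<exists>c<6. c \<noteq> d \<and> P6 y c \<noteq> 0"
proof -
  assume y: "y < 6"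
  obtain c where "c < 6" "c \<noteq> d" "c \<noteq> y"
  proof (cases "d = 0 \<or> y = 0")
    case True
    then show ?thesis using that[of 2] that[of 1] by (cases "d = 1 \<or> y = 1") auto
  next
    case False then show ?thesis using that[of 0] by auto
  qed
  then show ?thesis using y unfolding P6_def by (intro exI[of _ c]) (auto split: if_splits)
qed

fun bK :: "(nat \<Rightarrow> nat) \<Rightarrow> (nat \<Rightarrow> int) \<Rightarrow> nat \<Rightarrow> nat" where
  "bK a w 0 = (SOME c. c < 6 \<and> c \<noteq> a 1 \<and> P6 (a 0) c \<noteq> 0)"
| "bK a w (Suc i) = (SOME c. c < 6 \<and> c \<noteq> a (Suc (Suc i)) \<and> P6 (bK a w i) c \<noteq> 0 \<and>
      P6 (a (Suc i)) c \<noteq> 0 \<and> P6 (bK a w i) c * P6 (a (Suc i)) c = w i * P6 (a i) (bK a w i))"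

lemma P6_pm1: "P6 x y \<noteq> 0 \<Longrightarrow> pm1 (P6 x y)"
  using goodP6 unfolding goodP_def by blast

lemma bK_inv:
  assumes a: "\<forall>i. a i < 6" and w: "\<forall>i. pm1 (w i)"
  shows "bK a w i < 6 \<and> bK a w i \<noteq> a (Suc i) \<and> P6 (a i) (bK a w i) \<noteq> 0"
proof (induction i)
  case 0
  have "\<exists>c. c < 6 \<and> c \<noteq> a 1 \<and> P6 (a 0) c \<noteq> 0" using K6base[of "a 0" "a 1"] a by blast
  from someI_ex[OF this] show ?case by simp
next
  case (Suc i)
  define x where "x = bK a w i"
  have x: "x < 6" "x \<noteq> a (Suc i)" "P6 (a i) x \<noteq> 0" using Suc.IH unfolding x_def by auto
  have s: "pm1 (w i * P6 (a i) x)" using w P6_pm1[OF x(3)] by simp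
  have "\<exists>c. c < 6 \<and> c \<noteq> a (Suc (Suc i)) \<and> P6 x c \<noteq> 0 \<and>
      P6 (a (Suc i)) c \<noteq> 0 \<and> P6 x c * P6 (a (Suc i)) c = w i * P6 (a i) x"
    using K6prop[OF x(1) _ x(2) s, of "a (Suc (Suc i))"] a by blast
  from someI_ex[OF this] show ?case unfolding x_def by simp
qed

lemma bK_face:
  assumes a: "\<forall>i. a i < 6" and w: "\<forall>i. pm1 (w i)"
  shows "P6 (bK a w i) (bK a w (Suc i)) * P6 (a i) (bK a w i) * P6 (a (Suc i)) (bK a w (Suc i)) = w i"
proof -
  define x where "x = bK a w i"
  have x: "x < 6" "x \<noteq> a (Suc i)" "P6 (a i) x \<noteq> 0" using bK_inv[OF a w, of i] unfolding x_def by auto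
  have s: "pm1 (w i * P6 (a i) x)" using w P6_pm1[OF x(3)] by simp
  have "\<exists>c. c < 6 \<and> c \<noteq> a (Suc (Suc i)) \<and> P6 x c \<noteq> 0 \<and>
      P6 (a (Suc i)) c \<noteq> 0 \<and> P6 x c * P6 (a (Suc i)) c = w i * P6 (a i) x"
    using K6prop[OF x(1) _ x(2) s, of "a (Suc (Suc i))"] a by blast
  from someI_ex[OF this] have e: "P6 x (bK a w (Suc i)) * P6 (a (Suc i)) (bK a w (Suc i)) = w i * P6 (a i) x"
    unfolding x_def by simp
  have "P6 x (bK a w (Suc i)) * P6 (a i) x * P6 (a (Suc i)) (bK a w (Suc i))
      = (P6 x (bK a w (Suc i)) * P6 (a (Suc i)) (bK a w (Suc i))) * P6 (a i) x" by (simp add: ac_simps)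
  also have "\<dots> = w i * (P6 (a i) x * P6 (a i) x)" unfolding e by (simp add: ac_simps)
  also have "\<dots> = w i" using P6_pm1[OF x(3)] by simp
  finally show ?thesis unfolding x_def .
qed

definition G6 :: "(nat \<Rightarrow> nat) set" where "G6 = {a. \<forall>i. a i < 6}"

lemma STEP6: "STEP n 6 P6 G6"
  unfolding STEP_def
proof (intro ballI allI impI)
  fix a and w :: "nat \<Rightarrow> int" assume a: "a \<in> G6" and w: "\<forall>i. pm1 (w i)"
  have a': "\<forall>i. a i < 6" using a unfolding G6_def by simp
  show "\<exists>b\<in>G6. (\<forall>i<n. b i < 6 \<and> P6 (a i) (b i) \<noteq> 0) \<and>
          (\<forall>i. Suc i < n \<longrightarrow> P6 (b i) (b (Suc i)) * P6 (a i) (b i) * P6 (a (Suc i)) (b (Suc i)) = w i)"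
    using bK_inv[OF a' w] bK_face[OF a' w] unfolding G6_def by (intro bexI[of _ "bK a w"]) auto
qed

lemma INIT6: "INIT n 6 P6 G6"
  unfolding INIT_def G6_def
  by (rule bexI[of _ "\<lambda>i. i mod 2"]) (auto simp: P6_def negs6_def mod_Suc)


definition negs5 :: "(nat \<times> nat) list" where "negs5 = [(1,4),(2,3),(3,4)]"

definition P5 :: "nat \<Rightarrow> nat \<Rightarrow> int" where
  "P5 a b = (if a = b \<or> 5 \<le> a \<or> 5 \<le> b then 0
     else if (min a b, max a b) \<in> set negs5 then -1 else 1)"

lemma goodP5: "goodP 5 P5"
proof -
  have "P5 a b = P5 b a" for a b
    unfolding P5_def by (simp add: min.commute max.commute eq_commute[of a b] disj_commute)
  moreover have "P5 a a = 0" for a unfolding P5_def by simp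
  moreover have "pm1 (P5 a b) \<and> a < 5 \<and> b < 5" if "P5 a b \<noteq> 0" for a b
    using that unfolding P5_def pm1_def by (simp split: if_splits)
  ultimately show ?thesis unfolding goodP_def by blast
qed

lemma P5_pm1: "P5 x y \<noteq> 0 \<Longrightarrow> pm1 (P5 x y) \<and> x < 5 \<and> y < 5"
  using goodP5 unfolding goodP_def by blast

definition GL :: "(nat \<times> nat \<times> nat \<times> nat) list" where
  "GL = [(0,1,2,0), (0,1,2,4), (0,1,3,4), (0,1,4,2), (0,2,0,4), (0,2,1,2), (0,2,3,0), (0,2,3,2), (0,3,0,2), (0,3,1,0), (0,3,1,3), (0,3,2,4), (0,4,0,1), (0,4,0,2), (0,4,1,4), (0,4,2,1), (0,4,3,2), (1,0,2,1), (1,0,3,2), (1,0,4,3), (1,2,0,3), (1,2,1,3), (1,2,1,4), (1,2,3,0), (1,2,3,1), (1,2,4,3), (1,3,1,0), (1,3,2,1), (1,3,2,3), (1,3,2,4), (1,4,0,1), (1,4,0,3), (1,4,2,1), (1,4,3,1), (1,4,3,4), (2,0,1,0), (2,0,4,2), (2,1,0,4), (2,1,2,3), (2,1,3,1), (2,3,0,4), (2,3,1,2), (2,3,1,3), (2,3,4,3), (2,4,0,2), (2,4,1,0), (2,4,1,3), (2,4,2,3), (2,4,3,0), (2,4,3,1), (2,4,3,4), (3,0,1,2), (3,0,1,3), (3,0,1,4), (3,0,2,3), (3,1,2,0), (3,1,2,1), (3,1,3,4), (3,1,4,1), (3,1,4,3), (3,2,1,0), (3,2,3,0), (3,2,3,1),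 (3,2,4,1), (3,4,0,4), (3,4,1,2), (4,0,1,2), (4,0,1,3), (4,0,1,4), (4,0,3,1), (4,0,3,4), (4,0,4,0), (4,0,4,2), (4,0,4,3), (4,1,0,4), (4,1,4,2), (4,2,0,1), (4,2,0,2), (4,2,3,2), (4,2,3,4), (4,2,4,0), (4,3,1,0), (4,3,2,3), (4,3,4,0)]"

definition KS :: "nat list list" where
  "KS = [[21,25,70,33,42,62,44,43], [25,21,33,31,62,42,43,48], [35,28,17,25,41,42,44,63], [79,23,28,33,40,62,42,60], [43,52,41,42,28,27,75,33], [37,70,49,43,28,31,33,34], [37,53,42,36,64,75,28,27], [37,53,40,42,64,31,26,28], [33,70,60,58,23,79,25,21], [33,70,64,36,25,75,44,47], [33,37,36,64,75,74,76,44], [36,52,33,61,45,46,25,21], [21,25,42,78,60,28,61,38], [25,21,23,42,28,58,62,57], [82,18,23,25,28,27,61,62], [21,25,42,70,60,61,26,37], [35,21,74,25,60,56,37,28], [44,6,75,57,42,61,65,43], [37,82,45,46,64,42,63,80], [56,6,5,57,76,62,41,60], [53,36,49,41,70,11,9,65], [75,37,36,40,70,64,72,71], [44,75,48,43,82,69,8,71], [37,75,42,36,64,68,82,11], [53,37,42,36,68,64,82,71], [41,37,51,53,65,64,66,70], [62,75,64,36,49,70,44,47], [36,37,75,61,46,73,44,6], [53,37,60,62,71,66,12,6], [36,52,62,61,71,46,44,6], [36,43,6,7,70,82,61,78], [53,36,6,41,70,75,62,1], [36,6,42,40,75,61,9,70], [53,4,42,36,60,55,82,37], [35,52,41,42,60,55,9,75],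 [64,2,62,28,58,75,33,82], [64,6,28,60,74,33,82,81], [25,33,28,62,51,52,82,15], [60,6,30,33,53,51,83,64], [28,4,25,71,53,83,54,64], [71,33,3,32,6,62,25,21], [33,70,30,71,6,25,64,20], [33,1,72,71,6,74,15,64], [17,1,66,33,56,74,15,6], [25,21,6,79,28,53,9,2], [17,70,62,75,27,28,8,2], [70,77,6,74,27,11,2,8], [60,6,81,70,53,2,9,8], [21,56,25,75,52,53,28,27], [21,55,25,75,53,0,28,3], [60,21,17,25,51,52,9,28], [74,43,28,25,37,31,33,79], [75,74,6,11,39,37,33,80], [8,43,28,25,44,31,48,33], [9,6,14,75,80,33,45,39], [21,25,44,33,36,14,70,69], [21,6,44,43,36,79,13,70], [41,28,44,25,35,67,13,36], [8,6,44,28,77,79,13,70], [17,6,41,33,76,79,15,70], [74,75,19,16,37,28,33,36], [74,75,19,17,37,68,28,36], [13,75,19,0,44,37,28,36], [0,74,18,2,44,28,8,70], [25,21,6,7,28,27,41,42], [17,20,6,25,28,70,74,43], [37,2,33,34,58,43,28,25], [2,37,33,11,58,40,23,29], [44,15,6,33,55,43,28,25], [44,37,46,0,28,40,25,55], [44,31,15,46,41,28,56,25], [37,33,2,10,56,24,57,28], [37,33,2,60,56,23,28,26], [15,33,5,2,56,23,41,57], [36,10,6,62,25,33,28,27], [4,6,10,60,17,23,28,33], [36,28,42,16,53,18,9,59], [28,2,33,42,17,53,9,58], [37,31,26,28,58,53,9,17], [44,31,41,28,51,58,9,55], [37,28,2,39,17,54,53,52], [25,2,20,36,33,57,64,47],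 [35,37,22,23,53,51,60,33], [37,21,2,39,17,54,64,33]]"

definition W8 :: "(int \<times> int \<times> int) list" where
  "W8 = [(1, 1, 1), (1, 1, -1), (1, -1, 1), (1, -1, -1), (-1, 1, 1), (-1, 1, -1), (-1, -1, 1), (-1, -1, -1)]"

fun good5 :: "nat \<times> nat \<times> nat \<times> nat \<Rightarrow> nat \<times> nat \<times> nat \<times> nat \<Rightarrow> int \<times> int \<times> int \<Rightarrow> bool" where
  "good5 (a0, a1, a2, a3) (b0, b1, b2, b3) (w0, w1, w2) \<longleftrightarrow>
     P5 a0 b0 \<noteq> 0 \<and> P5 a1 b1 \<noteq> 0 \<and> P5 a2 b2 \<noteq> 0 \<and> P5 a3 b3 \<noteq> 0 \<and>
     P5 b0 b1 * P5 a0 b0 * P5 a1 b1 = w0 \<and>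
     P5 b1 b2 * P5 a1 b1 * P5 a2 b2 = w1 \<and>
     P5 b2 b3 * P5 a2 b2 * P5 a3 b3 = w2"

fun chkW :: "nat \<times> nat \<times> nat \<times> nat \<Rightarrow> nat list \<Rightarrow> (int \<times> int \<times> int) list \<Rightarrow> bool" where
  "chkW t (k # ks) (w # ws) = (k < length GL \<and> good5 t (GL ! k) w \<and> chkW t ks ws)"
| "chkW t [] [] = True"
| "chkW t _ _ = False"

fun chkA :: "(nat \<times> nat \<times> nat \<times> nat) list \<Rightarrow> nat list list \<Rightarrow> bool" where
  "chkA (t # ts) (ks # kss) = (chkW t ks W8 \<and> chkA ts kss)"
| "chkA [] [] = True"
| "chkA _ _ = False"

lemma chk5: "chkA GL KS"
  by (simp add: GL_def KS_def W8_def P5_def negs5_def)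

lemma chkW_D: "chkW t ks ws \<Longrightarrow> w \<in> set ws \<Longrightarrow> \<exists>b\<in>set GL. good5 t b w"
proof (induction t ks ws rule: chkW.induct)
  case (1 t k ks w' ws)
  then show ?case by (auto simp del: good5.simps)
qed auto

lemma chkA_D: "chkA ts kss \<Longrightarrow> t \<in> set ts \<Longrightarrow> w \<in> set W8 \<Longrightarrow> \<exists>b\<in>set GL. good5 t b w"
proof (induction ts kss rule: chkA.induct)
  case (1 t' ts ks kss)
  show ?case
  proof (cases "t = t'")
    case True
    then show ?thesis using chkW_D[of t' ks W8 w] "1.prems" by (simp del: good5.simps)
  next
    case False
    then show ?thesis using "1.IH" "1.prems" by (simp del: good5.simps)
  qed
qed auto

definition G5 :: "(nat \<Rightarrow> nat) set" where "G5 = {a. (a 0, a 1, a 2, a 3) \<in> set GL}"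

lemma W8_mem: "pm1 w0 \<Longrightarrow> pm1 w1 \<Longrightarrow> pm1 w2 \<Longrightarrow> (w0, w1, w2) \<in> set W8"
  unfolding pm1_def W8_def by auto

lemma lt4: "(i::nat) < 4 \<Longrightarrow> i = 0 \<or> i = 1 \<or> i = 2 \<or> i = 3"
  by auto

lemma STEP5: assumes n: "n \<le> 4" shows "STEP n 5 P5 G5"
  unfolding STEP_def
proof (intro ballI allI impI)
  fix a and w :: "nat \<Rightarrow> int" assume a: "a \<in> G5" and w: "\<forall>i. pm1 (w i)"
  have "(w 0, w 1, w 2) \<in> set W8" using W8_mem w by blast
  moreover have "(a 0, a 1, a 2, a 3) \<in> set GL" using a unfolding G5_def by simp
  ultimately obtain b where b: "b \<in> set GL" and
    g0: "good5 (a 0, a 1, a 2, a 3) b (w 0, w 1, w 2)"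
    using chkA_D[OF chk5] by blast
  obtain b0 b1 b2 b3 where bb: "b = (b0, b1, b2, b3)" by (cases b)
  have g: "P5 (a 0) b0 \<noteq> 0" "P5 (a 1) b1 \<noteq> 0" "P5 (a 2) b2 \<noteq> 0" "P5 (a 3) b3 \<noteq> 0"
     "P5 b0 b1 * P5 (a 0) b0 * P5 (a 1) b1 = w 0"
     "P5 b1 b2 * P5 (a 1) b1 * P5 (a 2) b2 = w 1"
     "P5 b2 b3 * P5 (a 2) b2 * P5 (a 3) b3 = w 2"
    using g0 unfolding bb by simp_all
  define bf :: "nat \<Rightarrow> nat" where "bf i = (if i = 0 then b0 else if i = 1 then b1 else if i = 2 then b2 else b3)" for i
  have bG: "bf \<in> G5" using b unfolding G5_def bf_def bb by simp
  have c1: "bf i < 5 \<and> P5 (a i) (bf i) \<noteq> 0" if "i < n" for i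
  proof -
    have "i = 0 \<or> i = 1 \<or> i = 2 \<or> i = 3" using that n by linarith
    then have "P5 (a i) (bf i) \<noteq> 0" using g(1-4) unfolding bf_def by (elim disjE) simp_all
    then show ?thesis using P5_pm1 by blast
  qed
  have c2: "P5 (bf i) (bf (Suc i)) * P5 (a i) (bf i) * P5 (a (Suc i)) (bf (Suc i)) = w i" if "Suc i < n" for i
  proof -
    have "i = 0 \<or> i = 1 \<or> i = 2" using that n by linarith
    then show ?thesis using g(5-7) unfolding bf_def by (elim disjE) (simp_all add: eval_nat_numeral)
  qed
  show "\<exists>b\<in>G5. (\<forall>i<n. b i < 5 \<and> P5 (a i) (b i) \<noteq> 0) \<and>
          (\<forall>i. Suc i < n \<longrightarrow> P5 (b i) (b (Suc i)) * P5 (a i) (b i) * P5 (a (Suc i)) (b (Suc i)) = w i)"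
    using bG c1 c2 by blast
qed

lemma INIT5: assumes n: "n \<le> 4" shows "INIT n 5 P5 G5"
  unfolding INIT_def G5_def
proof (rule bexI[of _ "\<lambda>i. if i = 0 then 0 else if i = 1 then 1 else if i = 2 then 2 else 0"], intro conjI allI impI)
  fix i assume "i < n"
  then show "(if i = 0 then 0 else if i = 1 then 1 else if i = 2 then 2 else 0) < (5::nat)" by simp
next
  fix i assume "Suc i < n"
  then have "i = 0 \<or> i = 1 \<or> i = 2" using n by auto
  then show "P5 (if i = 0 then 0 else if i = 1 then 1 else if i = 2 then 2 else 0)
          (if Suc i = 0 then 0 else if Suc i = 1 then 1 else if Suc i = 2 then 2 else 0) \<noteq> 0"
    by (auto simp: P5_def negs5_def)
qed (simp add: GL_def)


definition mt :: "nat \<Rightarrow> nat \<Rightarrow> nat" where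
  "mt a c = (if a + c = 1 \<or> a + c = 5 then 1 else if a + c = 2 \<or> a + c = 4 then 2 else 3)"

definition Xv :: "int \<times> int \<times> int \<Rightarrow> nat \<Rightarrow> int" where
  "Xv X k = (if k = 1 then fst X else if k = 2 then fst (snd X) else snd (snd X))"

datatype con = Ed nat nat | Fc nat nat nat nat int

fun holds :: "int \<times> int \<times> int \<Rightarrow> nat list \<Rightarrow> con \<Rightarrow> bool" where
  "holds X xs (Ed u v) = (xs ! u \<noteq> xs ! v)"
| "holds X xs (Fc a b c d s) = (if s = -1 then xs ! a \<noteq> xs ! c \<and> xs ! b \<noteq> xs ! d \<and> Xv X (mt (xs ! a) (xs ! c)) = -1
     else xs ! a = xs ! c \<or> xs ! b = xs ! d \<or> Xv X (mt (xs ! a) (xs ! c)) = 1)"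

fun okl :: "int \<times> int \<times> int \<Rightarrow> nat list \<Rightarrow> con list \<Rightarrow> bool" where
  "okl X xs [] = True"
| "okl X xs (c # cs) = (holds X xs c \<and> okl X xs cs)"

definition CS :: "con list list" where
  "CS = [[], [Ed 0 1], [Ed 0 2], [Ed 1 3, Ed 2 3, Fc 0 1 3 2 (-1)], [Ed 4 0], [Ed 4 5, Ed 5 2, Fc 4 0 2 5 (-1)], [Ed 6 4], [Ed 6 7, Ed 7 0, Fc 6 7 0 4 (-1)], [Ed 1 8], [Ed 3 9, Ed 8 9, Fc 1 8 9 3 (-1)], [Ed 7 10, Ed 10 1, Fc 7 10 1 0 (1)], [Ed 10 11, Ed 11 8, Fc 10 11 8 1 (-1)]]"

fun srch :: "int \<times> int \<times> int \<Rightarrow> nat \<Rightarrow> nat list \<Rightarrow> nat list \<Rightarrow> bool" where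
  "srch X 0 xs cands = True"
| "srch X (Suc f) xs [] = False"
| "srch X (Suc f) xs (c # cands) =
     (if okl X (xs @ [c]) (CS ! length xs)
      then (if srch X f (xs @ [c]) [0, 1, 2, 3] then True else srch X (Suc f) xs cands)
      else srch X (Suc f) xs cands)"

lemma srch_A: "\<not> srch (1, 1, 1) (Suc (Suc (Suc (Suc (Suc (Suc (Suc (Suc (Suc (Suc (Suc (Suc 0)))))))))))) [] [0, 1, 2, 3]"
  by (simp add: CS_def Xv_def mt_def)


lemma srch_B: "\<not> srch (1, -1, -1) (Suc (Suc (Suc (Suc (Suc (Suc (Suc (Suc (Suc (Suc (Suc (Suc 0)))))))))))) [] [0, 1, 2, 3]"
  by (simp add: CS_def Xv_def mt_def)


lemma srch_C: "\<not> srch (-1, 1, -1) (Suc (Suc (Suc (Suc (Suc (Suc (Suc (Suc (Suc (Suc (Suc (Suc 0)))))))))))) [] [0, 1, 2, 3]"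
  by (simp add: CS_def Xv_def mt_def)


lemma srch_D: "\<not> srch (-1, -1, 1) (Suc (Suc (Suc (Suc (Suc (Suc (Suc (Suc (Suc (Suc (Suc (Suc 0)))))))))))) [] [0, 1, 2, 3]"
  by (simp add: CS_def Xv_def mt_def)

fun idxs :: "con \<Rightarrow> nat set" where
  "idxs (Ed u v) = {u, v}"
| "idxs (Fc a b c d s) = {a, b, c, d}"

lemma holds_cong: "(\<forall>i\<in>idxs con. xs ! i = ys ! i) \<Longrightarrow> holds X xs con = holds X ys con"
  by (cases con) auto

lemma okl_cong: "(\<forall>con\<in>set cs. \<forall>i\<in>idxs con. xs ! i = ys ! i) \<Longrightarrow> okl X xs cs = okl X ys cs"
proof (induction cs)
  case Nil then show ?case by simp
next
  case (Cons c cs)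
  then show ?case using holds_cong[of c xs ys X] by simp
qed

lemma lt12: "(k::nat) < 12 \<Longrightarrow> k = 0 \<or> k = 1 \<or> k = 2 \<or> k = 3 \<or> k = 4 \<or> k = 5 \<or> k = 6 \<or> k = 7 \<or> k = 8 \<or> k = 9 \<or> k = 10 \<or> k = 11"
  by presburger

lemma CS_idx: "k < 12 \<Longrightarrow> con \<in> set (CS ! k) \<Longrightarrow> i \<in> idxs con \<Longrightarrow> i \<le> k"
  by (drule lt12) (auto simp: CS_def)

lemma srch_complete:
  "length xs + f = 12 \<Longrightarrow> xs = take (length xs) ys \<Longrightarrow> (0 < f \<Longrightarrow> ys ! length xs \<in> set cands) \<Longrightarrow>
   length ys = 12 \<Longrightarrow> \<forall>i<12. ys ! i < 4 \<Longrightarrow> \<forall>k<12. okl X ys (CS ! k) \<Longrightarrow> srch X f xs cands"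
proof (induction X f xs cands rule: srch.induct)
  case (1 X xs cands)
  then show ?case by simp
next
  case (2 X f xs)
  then show ?case by simp
next
  case (3 X f xs c cands)
  define L where "L = length xs"
  have L: "L < 12" using "3.prems"(1) unfolding L_def by simp
  show ?case
  proof (cases "c = ys ! L")
    case True
    have tk: "xs @ [c] = take (Suc L) ys" using "3.prems"(2,4) True L unfolding L_def
      by (metis take_Suc_conv_app_nth)
    have "okl X (xs @ [c]) (CS ! L) = okl X ys (CS ! L)"
    proof (rule okl_cong, intro ballI)
      fix con i assume "con \<in> set (CS ! L)" "i \<in> idxs con"
      then have "i \<le> L" using CS_idx L by blast
      then show "(xs @ [c]) ! i = ys ! i" unfolding tk by simp
    qed
    then have ok: "okl X (xs @ [c]) (CS ! length xs)" using "3.prems"(6) L unfolding L_def by simp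
    have "srch X f (xs @ [c]) [0, 1, 2, 3]"
    proof (rule "3.IH"(1)[OF ok])
      show "length (xs @ [c]) + f = 12" using "3.prems"(1) by simp
      show "xs @ [c] = take (length (xs @ [c])) ys" using tk L "3.prems"(4) unfolding L_def by simp
      show "ys ! length (xs @ [c]) \<in> set [0, 1, 2, 3]" if "0 < f"
      proof -
        have "length (xs @ [c]) < 12" using "3.prems"(1) that by simp
        then have "ys ! length (xs @ [c]) < 4" using "3.prems"(5) by blast
        then show ?thesis by auto
      qed
    qed (use "3.prems" in auto)
    then show ?thesis using ok by simp
  next
    case False
    then have mem: "ys ! length xs \<in> set cands" using "3.prems"(3) unfolding L_def by simp
    show ?thesis
    proof (cases "okl X (xs @ [c]) (CS ! length xs)")
      case True
      show ?thesis
      proof (cases "srch X f (xs @ [c]) [0, 1, 2, 3]")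
        case True
        then show ?thesis using \<open>okl X (xs @ [c]) (CS ! length xs)\<close> by simp
      next
        case False
        have "srch X (Suc f) xs cands"
          using "3.IH"(2)[OF \<open>okl X (xs @ [c]) (CS ! length xs)\<close> False] "3.prems" mem by simp
        then show ?thesis by simp
      qed
    next
      case False
      have "srch X (Suc f) xs cands" using "3.IH"(3)[OF False] "3.prems" mem by simp
      then show ?thesis using False by simp
    qed
  qed
qed

definition fp :: "(nat set \<Rightarrow> int) \<Rightarrow> nat \<Rightarrow> nat \<Rightarrow> nat \<Rightarrow> nat \<Rightarrow> int" where
  "fp Q a b c d = Q {a, b} * Q {b, c} * Q {c, d} * Q {d, a}"

definition CX :: "(nat set \<Rightarrow> int) \<Rightarrow> int \<times> int \<times> int" where
  "CX Q = (Q {0, 2} * Q {1, 2} * Q {1, 3} * Q {0, 3}, Q {0, 1} * Q {1, 2} * Q {2, 3} * Q {0, 3},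
           Q {0, 1} * Q {1, 3} * Q {2, 3} * Q {0, 2})"

lemma fp_deg:
  assumes Q: "\<forall>e. pm1 (Q e)" and ac: "a = c \<or> b = d"
  shows "fp Q a b c d = 1"
proof -
  have ab: "Q {b, a} = Q {a, b}" "Q {d, a} = Q {a, d}" "Q {c, b} = Q {b, c}" "Q {d, c} = Q {c, d}"
    by (simp_all add: insert_commute)
  from ac show ?thesis
  proof
    assume "a = c"
    then have "fp Q a b c d = (Q {a, b} * Q {a, b}) * (Q {a, d} * Q {a, d})"
      unfolding fp_def using ab by (simp add: ac_simps)
    then show ?thesis using Q by simp
  next
    assume "b = d"
    then have "fp Q a b c d = (Q {a, b} * Q {a, b}) * (Q {b, c} * Q {b, c})"
      unfolding fp_def using ab by (simp add: ac_simps)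
    then show ?thesis using Q by simp
  qed
qed

lemma lt4': "(i::nat) < 4 \<Longrightarrow> i = 0 \<or> i = 1 \<or> i = 2 \<or> i = 3"
  by presburger

lemma fp_cyc:
  assumes "a < 4" "b < 4" "c < 4" "d < 4" "a \<noteq> b" "a \<noteq> c" "a \<noteq> d" "b \<noteq> c" "b \<noteq> d" "c \<noteq> d"
  shows "fp Q a b c d = Xv (CX Q) (mt a c)"
  using lt4'[OF assms(1)] lt4'[OF assms(2)] lt4'[OF assms(3)] lt4'[OF assms(4)] assms(5-)
  by (elim disjE) (simp_all add: fp_def CX_def Xv_def mt_def insert_commute ac_simps)

lemma CX_cases:
  assumes Q: "\<forall>e. pm1 (Q e)"
  shows "CX Q = (1, 1, 1) \<or> CX Q = (1, -1, -1) \<or> CX Q = (-1, 1, -1) \<or> CX Q = (-1, -1, 1)"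
proof -
  define x where "x = Q {0, 2} * Q {1, 2} * Q {1, 3} * Q {0, 3}"
  define y where "y = Q {0, 1} * Q {1, 2} * Q {2, 3} * Q {0, 3}"
  define z where "z = Q {0, 1} * Q {1, 3} * Q {2, 3} * Q {0, 2}"
  have px: "pm1 x" "pm1 y" "pm1 z" unfolding x_def y_def z_def using Q by simp_all
  have "x * y * z = (Q {0, 1} * Q {0, 1}) * (Q {0, 2} * Q {0, 2}) * (Q {0, 3} * Q {0, 3}) *
      (Q {1, 2} * Q {1, 2}) * (Q {1, 3} * Q {1, 3}) * (Q {2, 3} * Q {2, 3})"
    unfolding x_def y_def z_def by (simp add: ac_simps)
  also have "\<dots> = 1" using Q by simp
  finally have "x * y * z = 1" .
  then have "(x, y, z) = (1, 1, 1) \<or> (x, y, z) = (1, -1, -1) \<or> (x, y, z) = (-1, 1, -1) \<or> (x, y, z) = (-1, -1, 1)"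
    using px unfolding pm1_def by auto
  then show ?thesis unfolding CX_def x_def y_def z_def .
qed

lemma fc_neg:
  assumes Q: "\<forall>e. pm1 (Q e)" and "a < 4" "b < 4" "c < 4" "d < 4" "a \<noteq> b" "b \<noteq> c" "c \<noteq> d" "d \<noteq> a"
    and f: "fp Q a b c d = -1"
  shows "a \<noteq> c \<and> b \<noteq> d \<and> Xv (CX Q) (mt a c) = -1"
proof -
  have "a \<noteq> c \<and> b \<noteq> d" using fp_deg[OF Q, of a c b d] f by auto
  moreover then have "Xv (CX Q) (mt a c) = -1" using fp_cyc[of a b c d Q] assms f by auto
  ultimately show ?thesis by blast
qed

lemma fc_pos:
  assumes Q: "\<forall>e. pm1 (Q e)" and "a < 4" "b < 4" "c < 4" "d < 4" "a \<noteq> b" "b \<noteq> c" "c \<noteq> d" "d \<noteq> a"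
    and f: "fp Q a b c d = 1"
  shows "a = c \<or> b = d \<or> Xv (CX Q) (mt a c) = 1"
  using fp_cyc[of a b c d Q] assms by auto

definition sig0 :: "(nat \<times> nat) set \<Rightarrow> int" where
  "sig0 e = (if e = {(1, 0), (1, 1)} \<or> e = {(2, 1), (2, 2)} \<or> e = {(1, 2), (1, 3)} then -1 else 1)"

lemma no_hom4:
  fixes F :: "nat set set" and \<phi> :: "nat \<times> nat \<Rightarrow> nat" and k :: nat
  assumes k: "k \<le> 4" and sg: "signed_graph {..<k} F \<pi>"
    and h: "signed_hom (grid_V 3 4) (grid_E 3 4) sig0 {..<k} F \<pi> \<phi>"
  shows False
proof -
  have rng: "\<forall>v\<in>grid_V 3 4. \<phi> v \<in> {..<k}" using h unfolding signed_hom_def by blast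
  obtain S where S: "\<forall>u v. {u, v} \<in> grid_E 3 4 \<longrightarrow> {\<phi> u, \<phi> v} \<in> F \<and> \<pi> {\<phi> u, \<phi> v} = switch S sig0 {u, v}"
    using h unfolding signed_hom_def by blast
  have sgF: "\<forall>e\<in>F. \<exists>u v. e = {u, v} \<and> u \<noteq> v \<and> u \<in> {..<k} \<and> v \<in> {..<k}"
    and sgP: "\<forall>e\<in>F. \<pi> e = 1 \<or> \<pi> e = -1" using sg unfolding signed_graph_def by (rule conjunct1, rule conjunct2)
  define Q where "Q e = (if e \<in> F then \<pi> e else 1)" for e
  have Q: "\<forall>e. pm1 (Q e)" using sgP unfolding Q_def pm1_def by auto
  define g where "g v = (if v \<in> S then -1 else (1::int))" for v
  have gp: "pm1 (g v)" for v unfolding g_def by simp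
  have edge: "\<phi> u \<noteq> \<phi> v \<and> Q {\<phi> u, \<phi> v} = sig0 {u, v} * g u * g v" if uv: "{u, v} \<in> grid_E 3 4" for u v
  proof -
    have uv': "u \<noteq> v" using uv by (cases rule: grid_E_cases) (auto simp: doubleton_eq_iff)
    have inF: "{\<phi> u, \<phi> v} \<in> F" and pe: "\<pi> {\<phi> u, \<phi> v} = switch S sig0 {u, v}" using S uv by blast+
    from bspec[OF sgF inF] obtain x y where xy: "{\<phi> u, \<phi> v} = {x, y}" "x \<noteq> y"
      by (elim exE conjE) (rule that)
    have "\<phi> u \<noteq> \<phi> v"
    proof
      assume "\<phi> u = \<phi> v"
      then have "{x, y} = {\<phi> u}" using xy(1) by simp
      then show False using xy(2) by (auto simp: doubleton_eq_iff)
    qed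
    moreover have "Q {\<phi> u, \<phi> v} = sig0 {u, v} * g u * g v"
      using inF pe switch_pair[OF uv'] unfolding Q_def g_def by simp
    ultimately show ?thesis by blast
  qed
  have face: "fp Q (\<phi> (i, j)) (\<phi> (i, Suc j)) (\<phi> (Suc i, Suc j)) (\<phi> (Suc i, j)) =
     sig0 {(i, j), (i, Suc j)} * sig0 {(i, Suc j), (Suc i, Suc j)} * sig0 {(Suc i, j), (Suc i, Suc j)} * sig0 {(i, j), (Suc i, j)}"
    if ij: "Suc i < 3" "Suc j < 4" for i j
  proof -
    have e1: "Q {\<phi> (i, j), \<phi> (i, Suc j)} = sig0 {(i, j), (i, Suc j)} * g (i, j) * g (i, Suc j)"
      using edge[OF grid_E_h[of i 3 j 4]] ij by simp
    have e2: "Q {\<phi> (i, Suc j), \<phi> (Suc i, Suc j)} = sig0 {(i, Suc j), (Suc i, Suc j)} * g (i, Suc j) * g (Suc i, Suc j)"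
      using edge[OF grid_E_v[of i 3 "Suc j" 4]] ij by simp
    have e3: "Q {\<phi> (Suc i, j), \<phi> (Suc i, Suc j)} = sig0 {(Suc i, j), (Suc i, Suc j)} * g (Suc i, j) * g (Suc i, Suc j)"
      using edge[OF grid_E_h[of "Suc i" 3 j 4]] ij by simp
    have e4: "Q {\<phi> (i, j), \<phi> (Suc i, j)} = sig0 {(i, j), (Suc i, j)} * g (i, j) * g (Suc i, j)"
      using edge[OF grid_E_v[of i 3 j 4]] ij by simp
    have c: "Q {\<phi> (Suc i, Suc j), \<phi> (Suc i, j)} = Q {\<phi> (Suc i, j), \<phi> (Suc i, Suc j)}"
       "Q {\<phi> (Suc i, j), \<phi> (i, j)} = Q {\<phi> (i, j), \<phi> (Suc i, j)}" by (simp_all add: insert_commute)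
    have "fp Q (\<phi> (i, j)) (\<phi> (i, Suc j)) (\<phi> (Suc i, Suc j)) (\<phi> (Suc i, j)) =
      (sig0 {(i, j), (i, Suc j)} * sig0 {(i, Suc j), (Suc i, Suc j)} * sig0 {(Suc i, j), (Suc i, Suc j)} * sig0 {(i, j), (Suc i, j)}) *
      ((g (i, j) * g (i, j)) * (g (i, Suc j) * g (i, Suc j)) * (g (Suc i, Suc j) * g (Suc i, Suc j)) * (g (Suc i, j) * g (Suc i, j)))"
      unfolding fp_def c e1 e2 e3 e4 by (simp add: ac_simps)
    then show ?thesis using gp by simp
  qed
  have rng4: "\<phi> (i, j) < 4" if "i < 3" "j < 4" for i j
    using rng k that unfolding grid_V_def by fastforce
have ne1: "\<phi> (0, 0) \<noteq> \<phi> (0, 1)" using edge[OF grid_E_h[of 0 3 0 4]] by (simp add: eval_nat_numeral)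
  have ne2: "\<phi> (0, 0) \<noteq> \<phi> (1, 0)" using edge[OF grid_E_v[of 0 3 0 4]] by (simp add: eval_nat_numeral)
  have ne3: "\<phi> (0, 1) \<noteq> \<phi> (0, 2)" using edge[OF grid_E_h[of 0 3 1 4]] by (simp add: eval_nat_numeral)
  have ne4: "\<phi> (0, 1) \<noteq> \<phi> (1, 1)" using edge[OF grid_E_v[of 0 3 1 4]] by (simp add: eval_nat_numeral)
  have ne5: "\<phi> (0, 2) \<noteq> \<phi> (0, 3)" using edge[OF grid_E_h[of 0 3 2 4]] by (simp add: eval_nat_numeral)
  have ne6: "\<phi> (0, 2) \<noteq> \<phi> (1, 2)" using edge[OF grid_E_v[of 0 3 2 4]] by (simp add: eval_nat_numeral)
  have ne7: "\<phi> (0, 3) \<noteq> \<phi> (1, 3)" using edge[OF grid_E_v[of 0 3 3 4]] by (simp add: eval_nat_numeral)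
  have ne8: "\<phi> (1, 0) \<noteq> \<phi> (1, 1)" using edge[OF grid_E_h[of 1 3 0 4]] by (simp add: eval_nat_numeral)
  have ne9: "\<phi> (1, 0) \<noteq> \<phi> (2, 0)" using edge[OF grid_E_v[of 1 3 0 4]] by (simp add: eval_nat_numeral)
  have ne10: "\<phi> (1, 1) \<noteq> \<phi> (1, 2)" using edge[OF grid_E_h[of 1 3 1 4]] by (simp add: eval_nat_numeral)
  have ne11: "\<phi> (1, 1) \<noteq> \<phi> (2, 1)" using edge[OF grid_E_v[of 1 3 1 4]] by (simp add: eval_nat_numeral)
  have ne12: "\<phi> (1, 2) \<noteq> \<phi> (1, 3)" using edge[OF grid_E_h[of 1 3 2 4]] by (simp add: eval_nat_numeral)
  have ne13: "\<phi> (1, 2) \<noteq> \<phi> (2, 2)" using edge[OF grid_E_v[of 1 3 2 4]] by (simp add: eval_nat_numeral)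
  have ne14: "\<phi> (1, 3) \<noteq> \<phi> (2, 3)" using edge[OF grid_E_v[of 1 3 3 4]] by (simp add: eval_nat_numeral)
  have ne15: "\<phi> (2, 0) \<noteq> \<phi> (2, 1)" using edge[OF grid_E_h[of 2 3 0 4]] by (simp add: eval_nat_numeral)
  have ne16: "\<phi> (2, 1) \<noteq> \<phi> (2, 2)" using edge[OF grid_E_h[of 2 3 1 4]] by (simp add: eval_nat_numeral)
  have ne17: "\<phi> (2, 2) \<noteq> \<phi> (2, 3)" using edge[OF grid_E_h[of 2 3 2 4]] by (simp add: eval_nat_numeral)
  have r00: "\<phi> (0, 0) < 4" using rng4[of 0 0] by simp
  have r01: "\<phi> (0, 1) < 4" using rng4[of 0 1] by simp
  have r02: "\<phi> (0, 2) < 4" using rng4[of 0 2] by simp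
  have r03: "\<phi> (0, 3) < 4" using rng4[of 0 3] by simp
  have r10: "\<phi> (1, 0) < 4" using rng4[of 1 0] by simp
  have r11: "\<phi> (1, 1) < 4" using rng4[of 1 1] by simp
  have r12: "\<phi> (1, 2) < 4" using rng4[of 1 2] by simp
  have r13: "\<phi> (1, 3) < 4" using rng4[of 1 3] by simp
  have r20: "\<phi> (2, 0) < 4" using rng4[of 2 0] by simp
  have r21: "\<phi> (2, 1) < 4" using rng4[of 2 1] by simp
  have r22: "\<phi> (2, 2) < 4" using rng4[of 2 2] by simp
  have r23: "\<phi> (2, 3) < 4" using rng4[of 2 3] by simp
  have fe00: "fp Q (\<phi> (0, 0)) (\<phi> (0, 1)) (\<phi> (1, 1)) (\<phi> (1, 0)) = -1" using face[of 0 0] by (simp add: sig0_def eval_nat_numeral doubleton_eq_iff)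
  have fc00: "\<phi> (0, 0) \<noteq> \<phi> (1, 1) \<and> \<phi> (0, 1) \<noteq> \<phi> (1, 0) \<and> Xv (CX Q) (mt (\<phi> (0, 0)) (\<phi> (1, 1))) = -1" using fc_neg[OF Q r00 r01 r11 r10 _ _ _ _ fe00] ne1 ne2 ne3 ne4 ne5 ne6 ne7 ne8 ne9 ne10 ne11 ne12 ne13 ne14 ne15 ne16 ne17 by auto
  have fe01: "fp Q (\<phi> (0, 1)) (\<phi> (0, 2)) (\<phi> (1, 2)) (\<phi> (1, 1)) = 1" using face[of 0 1] by (simp add: sig0_def eval_nat_numeral doubleton_eq_iff)
  have fc01: "\<phi> (0, 1) = \<phi> (1, 2) \<or> \<phi> (0, 2) = \<phi> (1, 1) \<or> Xv (CX Q) (mt (\<phi> (0, 1)) (\<phi> (1, 2))) = 1" using fc_pos[OF Q r01 r02 r12 r11 _ _ _ _ fe01] ne1 ne2 ne3 ne4 ne5 ne6 ne7 ne8 ne9 ne10 ne11 ne12 ne13 ne14 ne15 ne16 ne17 by auto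
  have fe02: "fp Q (\<phi> (0, 2)) (\<phi> (0, 3)) (\<phi> (1, 3)) (\<phi> (1, 2)) = -1" using face[of 0 2] by (simp add: sig0_def eval_nat_numeral doubleton_eq_iff)
  have fc02: "\<phi> (0, 2) \<noteq> \<phi> (1, 3) \<and> \<phi> (0, 3) \<noteq> \<phi> (1, 2) \<and> Xv (CX Q) (mt (\<phi> (0, 2)) (\<phi> (1, 3))) = -1" using fc_neg[OF Q r02 r03 r13 r12 _ _ _ _ fe02] ne1 ne2 ne3 ne4 ne5 ne6 ne7 ne8 ne9 ne10 ne11 ne12 ne13 ne14 ne15 ne16 ne17 by auto
  have fe10: "fp Q (\<phi> (1, 0)) (\<phi> (1, 1)) (\<phi> (2, 1)) (\<phi> (2, 0)) = -1" using face[of 1 0] by (simp add: sig0_def eval_nat_numeral doubleton_eq_iff)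
  have fc10: "\<phi> (1, 0) \<noteq> \<phi> (2, 1) \<and> \<phi> (1, 1) \<noteq> \<phi> (2, 0) \<and> Xv (CX Q) (mt (\<phi> (1, 0)) (\<phi> (2, 1))) = -1" using fc_neg[OF Q r10 r11 r21 r20 _ _ _ _ fe10] ne1 ne2 ne3 ne4 ne5 ne6 ne7 ne8 ne9 ne10 ne11 ne12 ne13 ne14 ne15 ne16 ne17 by auto
  have fe11: "fp Q (\<phi> (1, 1)) (\<phi> (1, 2)) (\<phi> (2, 2)) (\<phi> (2, 1)) = -1" using face[of 1 1] by (simp add: sig0_def eval_nat_numeral doubleton_eq_iff)
  have fc11: "\<phi> (1, 1) \<noteq> \<phi> (2, 2) \<and> \<phi> (1, 2) \<noteq> \<phi> (2, 1) \<and> Xv (CX Q) (mt (\<phi> (1, 1)) (\<phi> (2, 2))) = -1" using fc_neg[OF Q r11 r12 r22 r21 _ _ _ _ fe11] ne1 ne2 ne3 ne4 ne5 ne6 ne7 ne8 ne9 ne10 ne11 ne12 ne13 ne14 ne15 ne16 ne17 by auto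
  have fe12: "fp Q (\<phi> (1, 2)) (\<phi> (1, 3)) (\<phi> (2, 3)) (\<phi> (2, 2)) = -1" using face[of 1 2] by (simp add: sig0_def eval_nat_numeral doubleton_eq_iff)
  have fc12: "\<phi> (1, 2) \<noteq> \<phi> (2, 3) \<and> \<phi> (1, 3) \<noteq> \<phi> (2, 2) \<and> Xv (CX Q) (mt (\<phi> (1, 2)) (\<phi> (2, 3))) = -1" using fc_neg[OF Q r12 r13 r23 r22 _ _ _ _ fe12] ne1 ne2 ne3 ne4 ne5 ne6 ne7 ne8 ne9 ne10 ne11 ne12 ne13 ne14 ne15 ne16 ne17 by auto
  define ys where "ys = [\<phi> (1, 1), \<phi> (1, 2), \<phi> (2, 1), \<phi> (2, 2), \<phi> (1, 0), \<phi> (2, 0), \<phi> (0, 0), \<phi> (0, 1), \<phi> (1, 3), \<phi> (2, 3), \<phi> (0, 2), \<phi> (0, 3)]"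
  have ylen: "length ys = 12" unfolding ys_def by simp
  have yr: "\<forall>i<12. ys ! i < 4"
  proof (intro allI impI)
    fix i :: nat assume "i < 12"
    then show "ys ! i < 4" unfolding ys_def using r00 r01 r02 r03 r10 r11 r12 r13 r20 r21 r22 r23
      by (elim lt12[elim_format] disjE) simp_all
  qed
  have yok: "\<forall>kk<12. okl (CX Q) ys (CS ! kk)"
  proof (intro allI impI)
    fix kk :: nat assume "kk < 12"
    then show "okl (CX Q) ys (CS ! kk)" unfolding ys_def CS_def
      using ne1 ne2 ne3 ne4 ne5 ne6 ne7 ne8 ne9 ne10 ne11 ne12 ne13 ne14 ne15 ne16 ne17 fc00 fc01 fc02 fc10 fc11 fc12
      by (elim lt12[elim_format] disjE) (simp_all add: eq_commute[of "\<phi> (1, 1)" "\<phi> (1, 0)"])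
  qed
  have "srch (CX Q) (Suc (Suc (Suc (Suc (Suc (Suc (Suc (Suc (Suc (Suc (Suc (Suc 0)))))))))))) [] [0, 1, 2, 3]"
    by (rule srch_complete[OF _ _ _ ylen yr yok]) (use lt4'[OF r11] in \<open>auto simp: ys_def\<close>)
  then show False using CX_cases[OF Q] srch_A srch_B srch_C srch_D by metis
qed


lemma sig0_sg: "signed_graph (grid_V 3 4) (grid_E 3 4) sig0"
  by (rule grid_sg) (simp add: sig0_def)

lemma chi_sig0: "chi_s (grid_V 3 4) (grid_E 3 4) sig0 = 5"
  unfolding chi_s_def
proof (rule Least_equality)
  show "\<exists>(F :: nat set set) \<pi> \<phi>. signed_graph {..<5} F \<pi> \<and> signed_hom (grid_V 3 4) (grid_E 3 4) sig0 {..<5} F \<pi> \<phi>"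
    by (rule grid_hom_ex[OF sig0_sg _ goodP5 INIT5 STEP5]) simp_all
next
  fix y assume "\<exists>(F :: nat set set) \<pi> \<phi>. signed_graph {..<y} F \<pi> \<and> signed_hom (grid_V 3 4) (grid_E 3 4) sig0 {..<y} F \<pi> \<phi>"
  then obtain F :: "nat set set" and \<pi> \<phi> where "signed_graph {..<y} F \<pi>" "signed_hom (grid_V 3 4) (grid_E 3 4) sig0 {..<y} F \<pi> \<phi>"
    by blast
  then show "5 \<le> y" using no_hom4[of y F \<pi> \<phi>] by (cases "y \<le> 4") auto
qed

theorem theorem4p5:
  shows "(\<forall>n m (\<sigma> :: (nat \<times> nat) set \<Rightarrow> int).
            1 \<le> n \<and> n \<le> m \<and> signed_graph (grid_V n m) (grid_E n m) \<sigma> \<longrightarrow>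
              chi_s (grid_V n m) (grid_E n m) \<sigma> \<le> 6 \<and>
              (n \<le> 4 \<longrightarrow> chi_s (grid_V n m) (grid_E n m) \<sigma> \<le> 5)) \<and>
         (\<exists>n m (\<sigma> :: (nat \<times> nat) set \<Rightarrow> int).
            1 \<le> n \<and> n \<le> m \<and> signed_graph (grid_V n m) (grid_E n m) \<sigma> \<and>
            chi_s (grid_V n m) (grid_E n m) \<sigma> = 5)"
proof (intro conjI allI impI)
  fix n m :: nat and \<sigma> :: "(nat \<times> nat) set \<Rightarrow> int"
  assume h: "1 \<le> n \<and> n \<le> m \<and> signed_graph (grid_V n m) (grid_E n m) \<sigma>"
  then have m: "1 \<le> m" and sg: "signed_graph (grid_V n m) (grid_E n m) \<sigma>" by auto
  show "chi_s (grid_V n m) (grid_E n m) \<sigma> \<le> 6"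
    by (rule grid_bound[OF sg m goodP6 INIT6 STEP6])
  assume n4: "n \<le> 4"
  show "chi_s (grid_V n m) (grid_E n m) \<sigma> \<le> 5"
    by (rule grid_bound[OF sg m goodP5 INIT5[OF n4] STEP5[OF n4]])
next
  show "\<exists>n m (\<sigma> :: (nat \<times> nat) set \<Rightarrow> int).
            1 \<le> n \<and> n \<le> m \<and> signed_graph (grid_V n m) (grid_E n m) \<sigma> \<and>
            chi_s (grid_V n m) (grid_E n m) \<sigma> = 5"
    using sig0_sg chi_sig0 by (intro exI[of _ 3] exI[of _ 4] exI[of _ sig0]) simp
qed

end
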